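(* Let $H$ be a finite simple graph whose vertex set can be partitioned into anticliques (independent sets) of sizes $x_1,x_2,\ldots,x_k$. Then $$\rho(H) \geq \sum_{i=1}^k \frac{x_i(x_i + 1)}{2}.$$
   Context: All graphs are finite and simple. A coloring means a proper vertex coloring; an induced subgraph is rainbow if all its vertices have pairwise different colors. For a graph $H$, $\rho(H)$ is the least number $m$ such that there exists a graph $G$ on $m$ vertices such that every proper vertex coloring of $G$ contains a rainbow induced subgraph isomorphic to $H$. An anticlique is a set of pairwise non-adjacent vertices. *)

theory Defs
  imports Main "HOL-Library.Extended_Nat"
begin

definition simple_graph :: "'a set \<Rightarrow> ('a \<Rightarrow> 'a \<Rightarrow> bool) \<Rightarrow> bool" where
  "simple_graph V E \<longleftrightarrow> finite V \<and> (\<forall>u\<in>V. \<forall>v\<in>V. E u v \<longrightarrow> E v u) \<and> (\<forall>v\<in>V. \<not> E v v)"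

definition proper_coloring :: "'a set \<Rightarrow> ('a \<Rightarrow> 'a \<Rightarrow> bool) \<Rightarrow> ('a \<Rightarrow> nat) \<Rightarrow> bool" where
  "proper_coloring V E c \<longleftrightarrow> (\<forall>u\<in>V. \<forall>v\<in>V. E u v \<longrightarrow> c u \<noteq> c v)"

definition anticlique :: "('a \<Rightarrow> 'a \<Rightarrow> bool) \<Rightarrow> 'a set \<Rightarrow> bool" where
  "anticlique E A \<longleftrightarrow> (\<forall>u\<in>A. \<forall>v\<in>A. \<not> E u v)"

definition rainbow_induced_copy ::
  "'b set \<Rightarrow> ('b \<Rightarrow> 'b \<Rightarrow> bool) \<Rightarrow> 'a set \<Rightarrow> ('a \<Rightarrow> 'a \<Rightarrow> bool) \<Rightarrow> ('a \<Rightarrow> nat) \<Rightarrow> bool" where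
  "rainbow_induced_copy VH EH VG EG c \<longleftrightarrow>
     (\<exists>f. f ` VH \<subseteq> VG \<and> inj_on f VH \<and>
          (\<forall>u\<in>VH. \<forall>v\<in>VH. EH u v \<longleftrightarrow> EG (f u) (f v)) \<and>
          inj_on (c \<circ> f) VH)"

text \<open>Graphs G are taken on vertex sets of naturals (every finite
  graph is isomorphic to one). Value in enat; infinity if no such G exists.\<close>
definition rho :: "'b set \<Rightarrow> ('b \<Rightarrow> 'b \<Rightarrow> bool) \<Rightarrow> enat" where
  "rho VH EH = Inf {enat (card VG) | VG EG :: nat \<Rightarrow> nat \<Rightarrow> bool.
      simple_graph VG EG \<and>
      (\<forall>c. proper_coloring VG EG c \<longrightarrow> rainbow_induced_copy VH EH VG EG c)}"

end

theory Submission
  imports Defs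
begin

definition maxanti :: "('a \<Rightarrow> 'a \<Rightarrow> bool) \<Rightarrow> 'a set \<Rightarrow> 'a set" where
  "maxanti E A = (SOME B. B \<subseteq> A \<and> anticlique E B \<and>
      (\<forall>B'. B' \<subseteq> A \<and> anticlique E B' \<longrightarrow> card B' \<le> card B))"

lemma maxanti_ex:
  assumes "finite A"
  shows "\<exists>B. B \<subseteq> A \<and> anticlique E B \<and> (\<forall>B'. B' \<subseteq> A \<and> anticlique E B' \<longrightarrow> card B' \<le> card B)"
proof -
  define F where "F = {B. B \<subseteq> A \<and> anticlique E B}"
  have fin: "finite F" unfolding F_def using assms by (simp add: finite_subset)
  have ne: "{} \<in> F" unfolding F_def anticlique_def by auto
  have "Max (card ` F) \<in> card ` F" using fin ne by (intro Max_in) auto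
  then obtain B where B: "B \<in> F" "card B = Max (card ` F)" by auto
  have "\<forall>B'. B' \<in> F \<longrightarrow> card B' \<le> card B" using B fin by auto
  then show ?thesis using B(1) unfolding F_def by auto
qed

lemma maxanti:
  assumes "finite A"
  shows "maxanti E A \<subseteq> A" "anticlique E (maxanti E A)"
    "\<And>B'. B' \<subseteq> A \<Longrightarrow> anticlique E B' \<Longrightarrow> card B' \<le> card (maxanti E A)"
  using someI_ex[OF maxanti_ex[OF assms, of E]] unfolding maxanti_def by blast+

primrec rem :: "('a \<Rightarrow> 'a \<Rightarrow> bool) \<Rightarrow> 'a set \<Rightarrow> nat \<Rightarrow> 'a set" where
  "rem E V 0 = V"
| "rem E V (Suc j) = rem E V j - maxanti E (rem E V j)"

lemma rem_sub: "rem E V j \<subseteq> V"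
  by (induction j) auto

lemma rem_mono: "j \<le> j' \<Longrightarrow> rem E V j' \<subseteq> rem E V j"
proof (induction j' rule: dec_induct)
  case base then show ?case by simp
next
  case (step n) then show ?case by auto
qed

lemma key_coloring:
  assumes sg: "simple_graph V E"
  shows "\<exists>c I. proper_coloring V E c \<and> (\<forall>j. I j \<subseteq> V)
     \<and> (\<forall>j j'. j \<noteq> j' \<longrightarrow> I j \<inter> I j' = {})
     \<and> (\<forall>T j. T \<subseteq> V \<longrightarrow> anticlique E T \<longrightarrow> (\<forall>v\<in>T. j \<le> c v) \<longrightarrow> card T \<le> card (I j))"
proof -
  have finV: "finite V" using sg unfolding simple_graph_def by auto
  have irr: "\<And>v. v \<in> V \<Longrightarrow> \<not> E v v" using sg unfolding simple_graph_def by auto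
  define I where "I j = maxanti E (rem E V j)" for j
  have finR: "finite (rem E V j)" for j using rem_sub[of E V j] finV by (rule finite_subset)
  have IR: "I j \<subseteq> rem E V j" for j unfolding I_def using maxanti(1)[OF finR] .
  have Ianti: "anticlique E (I j)" for j unfolding I_def using maxanti(2)[OF finR] .
  have Imax: "\<And>T. T \<subseteq> rem E V j \<Longrightarrow> anticlique E T \<Longrightarrow> card T \<le> card (I j)" for j
    unfolding I_def using maxanti(3)[OF finR] by blast
  have IV: "I j \<subseteq> V" for j using IR[of j] rem_sub[of E V j] by (rule subset_trans)
  have disj: "I j \<inter> I j' = {}" if "j < j'" for j j'
  proof -
    have "I j' \<subseteq> rem E V (Suc j)" using IR[of j'] rem_mono[of "Suc j" j' E V] that by auto
    then have "I j' \<subseteq> rem E V j - I j" unfolding I_def by simp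
    then show ?thesis by blast
  qed
  have disj2: "\<forall>j j'. j \<noteq> j' \<longrightarrow> I j \<inter> I j' = {}"
    using disj by (metis Int_commute linorder_neqE_nat)
  have dec: "rem E V j = {} \<or> card (rem E V j) + j \<le> card V" for j
  proof (induction j)
    case 0 then show ?case by simp
  next
    case (Suc j)
    show ?case
    proof (cases "rem E V j = {}")
      case True then show ?thesis by simp
    next
      case False
      then obtain v where v: "v \<in> rem E V j" by auto
      have "v \<in> V" using v rem_sub[of E V j] by (rule subsetD[rotated])
      have "anticlique E {v}" using irr[OF \<open>v \<in> V\<close>] unfolding anticlique_def by auto
      then have "card {v} \<le> card (I j)" using Imax[of "{v}" j] v by auto
      then have "I j \<noteq> {}" by auto
      then obtain w where w: "w \<in> I j" by blast
      then have "w \<in> rem E V j" using IR[of j] by (rule subsetD[rotated])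
      then have "rem E V j - I j \<subset> rem E V j" using w by blast
      then have "card (rem E V j - I j) < card (rem E V j)"
        using finR[of j] by (rule psubset_card_mono[rotated])
      then have "card (rem E V (Suc j)) < card (rem E V j)"
        unfolding I_def by simp
      then show ?thesis using Suc False by auto
    qed
  qed
  have remE: "rem E V (card V) = {}"
  proof (rule ccontr)
    assume "rem E V (card V) \<noteq> {}"
    then have "card (rem E V (card V)) > 0" using finR by (simp add: card_gt_0_iff)
    then show False using dec[of "card V"] \<open>rem E V (card V) \<noteq> {}\<close> by auto
  qed
  have cov: "\<exists>j. v \<in> I j" if "v \<in> V" for v
  proof -
    have ex: "\<exists>j. v \<notin> rem E V j" using remE by auto
    define j where "j = (LEAST j. v \<notin> rem E V j)"
    have j1: "v \<notin> rem E V j" unfolding j_def using LeastI_ex[OF ex] .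
    have "j \<noteq> 0" using j1 that by (cases j) auto
    then obtain j' where j': "j = Suc j'" using not0_implies_Suc by blast
    have "v \<in> rem E V j'" using not_less_Least[of j' "\<lambda>j. v \<notin> rem E V j"] j' unfolding j_def by auto
    then have "v \<in> I j'" using j1 j' unfolding I_def by auto
    then show ?thesis by blast
  qed
  define c where "c v = (LEAST j. v \<in> I j)" for v
  have cI: "v \<in> I (c v)" if "v \<in> V" for v
    unfolding c_def using LeastI_ex[OF cov[OF that]] .
  have proper: "proper_coloring V E c"
    unfolding proper_coloring_def
  proof (intro ballI impI)
    fix u v assume "u \<in> V" "v \<in> V" "E u v"
    show "c u \<noteq> c v"
    proof
      assume "c u = c v"
      then have "u \<in> I (c u)" "v \<in> I (c u)" using cI[OF \<open>u \<in> V\<close>] cI[OF \<open>v \<in> V\<close>] by simp_all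
      then show False using Ianti[of "c u"] \<open>E u v\<close> unfolding anticlique_def by blast
    qed
  qed
  have main: "card T \<le> card (I j)" if "T \<subseteq> V" "anticlique E T" "\<forall>v\<in>T. j \<le> c v" for T j
  proof -
    have "T \<subseteq> rem E V j"
    proof
      fix v assume "v \<in> T"
      then have "v \<in> I (c v)" "j \<le> c v" using cI that by auto
      then show "v \<in> rem E V j" using IR[of "c v"] rem_mono[of j "c v" E V] by auto
    qed
    then show ?thesis using Imax that(2) by blast
  qed
  show ?thesis using proper IV disj2 main by blast
qed

lemma comb:
  fixes c :: "'a \<Rightarrow> nat" and g :: "nat \<Rightarrow> nat"
  assumes "finite S" "inj_on c S"
    "\<forall>v\<in>S. card {w\<in>S. c v \<le> c w} \<le> g (c v)"
  shows "card S * (card S + 1) \<le> 2 * (\<Sum>v\<in>S. g (c v))"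
  using assms
proof (induction "card S" arbitrary: S)
  case 0 then show ?case by simp
next
  case (Suc n)
  then have ne: "S \<noteq> {}" by auto
  have "Min (c ` S) \<in> c ` S" using Suc.prems ne by (intro Min_in) auto
  then obtain v0 where v0: "v0 \<in> S" "c v0 = Min (c ` S)" by auto
  define S' where "S' = S - {v0}"
  have lt: "c v0 < c v" if "v \<in> S'" for v
  proof -
    have "c v0 \<le> c v" using v0 that Suc.prems(1) unfolding S'_def by auto
    moreover have "c v0 \<noteq> c v" using Suc.prems(2) v0 that unfolding S'_def inj_on_def by auto
    ultimately show ?thesis by simp
  qed
  have eqs: "{w\<in>S'. c v \<le> c w} = {w\<in>S. c v \<le> c w}" if "v \<in> S'" for v
    using lt[OF that] unfolding S'_def by auto
  have h': "\<forall>v\<in>S'. card {w\<in>S'. c v \<le> c w} \<le> g (c v)"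
    using Suc.prems(3) eqs unfolding S'_def by auto
  have cS': "card S' = n" using Suc.hyps(2) v0 Suc.prems(1) unfolding S'_def by auto
  have IH: "n * (n+1) \<le> 2 * (\<Sum>v\<in>S'. g (c v))"
    using Suc.hyps(1)[of S'] cS' h' Suc.prems(1,2) unfolding S'_def by (auto intro: inj_on_subset)
  have "{w\<in>S. c v0 \<le> c w} = S" using v0 Suc.prems(1) by auto
  then have g0: "card S \<le> g (c v0)" using Suc.prems(3) v0 by auto
  have "(\<Sum>v\<in>S. g (c v)) = g (c v0) + (\<Sum>v\<in>S'. g (c v))"
    unfolding S'_def using Suc.prems(1) v0 by (simp add: sum.remove)
  then show ?case using IH g0 Suc.hyps(2)[symmetric] by (simp add: algebra_simps)
qed

theorem theorem2p1:
  fixes VH :: "'b set" and EH :: "'b \<Rightarrow> 'b \<Rightarrow> bool"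
    and k :: nat and P :: "nat \<Rightarrow> 'b set" and x :: "nat \<Rightarrow> nat"
  assumes "simple_graph VH EH"
    and "(\<Union>i<k. P i) = VH"
    and "\<And>i j. i < k \<Longrightarrow> j < k \<Longrightarrow> i \<noteq> j \<Longrightarrow> P i \<inter> P j = {}"
    and "\<And>i. i < k \<Longrightarrow> anticlique EH (P i)"
    and "\<And>i. i < k \<Longrightarrow> card (P i) = x i"
  shows "rho VH EH \<ge> enat (\<Sum>i<k. x i * (x i + 1) div 2)"
  unfolding rho_def
proof (rule Inf_greatest, clarify)
  fix VG :: "nat set" and EG
  assume sg: "simple_graph VG EG"
    and all: "\<forall>c. proper_coloring VG EG c \<longrightarrow> rainbow_induced_copy VH EH VG EG c"
  have finVH: "finite VH" using assms(1) unfolding simple_graph_def by auto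
  have finVG: "finite VG" using sg unfolding simple_graph_def by auto
  obtain c I where pc: "proper_coloring VG EG c" and IV: "\<forall>j. I j \<subseteq> VG"
    and Id: "\<forall>j j'. j \<noteq> j' \<longrightarrow> I j \<inter> I j' = {}"
    and Im0: "\<forall>T j. T \<subseteq> VG \<longrightarrow> anticlique EG T \<longrightarrow> (\<forall>v\<in>T. j \<le> c v) \<longrightarrow> card T \<le> card (I j)"
    using key_coloring[OF sg] by blast
  have Im: "card T \<le> card (I j)" if "T \<subseteq> VG" "anticlique EG T" "\<forall>v\<in>T. j \<le> c v" for T j
    using Im0 that by blast
  obtain f where f: "f ` VH \<subseteq> VG" "inj_on f VH" "\<forall>u\<in>VH. \<forall>v\<in>VH. EH u v \<longleftrightarrow> EG (f u) (f v)"
    "inj_on (c \<circ> f) VH"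
    using all pc unfolding rainbow_induced_copy_def by blast
  have PV: "P i \<subseteq> VH" if "i < k" for i using assms(2) that by auto
  have cinj: "inj_on c (f ` VH)" using f(4) by (simp add: inj_on_imageI)
  define g where "g j = card (I j)" for j
  have each: "x i * (x i + 1) div 2 \<le> (\<Sum>v\<in>f ` P i. g (c v))" if "i < k" for i
  proof -
    let ?S = "f ` P i"
    have finS: "finite ?S" using finVH PV[OF that] by (meson finite_imageI finite_subset)
    have cardS: "card ?S = x i" using assms(5)[OF that] f(2) PV[OF that]
      by (metis card_image inj_on_subset)
    have SG: "?S \<subseteq> VG" using f(1) PV[OF that] by blast
    have anti: "anticlique EG ?S" using assms(4)[OF that] f(3) PV[OF that]
      unfolding anticlique_def by blast
    have cS: "inj_on c ?S" using cinj PV[OF that] by (meson image_mono inj_on_subset)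
    have "\<forall>v\<in>?S. card {w\<in>?S. c v \<le> c w} \<le> g (c v)"
    proof
      fix v assume "v \<in> ?S"
      have "{w\<in>?S. c v \<le> c w} \<subseteq> VG" using SG by auto
      moreover have "anticlique EG {w\<in>?S. c v \<le> c w}" using anti unfolding anticlique_def by auto
      moreover have "\<forall>w\<in>{w\<in>?S. c v \<le> c w}. c v \<le> c w" by simp
      ultimately show "card {w\<in>?S. c v \<le> c w} \<le> g (c v)" unfolding g_def by (rule Im)
    qed
    from comb[OF finS cS this] cardS show ?thesis by simp
  qed
  have "(\<Sum>i<k. x i * (x i + 1) div 2) \<le> (\<Sum>i<k. \<Sum>v\<in>f ` P i. g (c v))"
    using each by (rule sum_mono) simp
  also have "\<dots> = (\<Sum>v\<in>(\<Union>i<k. f ` P i). g (c v))"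
  proof (rule sum.UNION_disjoint[symmetric])
    show "finite {..<k}" by simp
    show "\<forall>i\<in>{..<k}. finite (f ` P i)" using finVH PV by (meson finite_imageI finite_subset lessThan_iff)
    show "\<forall>i\<in>{..<k}. \<forall>j\<in>{..<k}. i \<noteq> j \<longrightarrow> f ` P i \<inter> f ` P j = {}"
    proof (intro ballI impI)
      fix i j assume ij: "i \<in> {..<k}" "j \<in> {..<k}" "i \<noteq> j"
      have "f ` P i \<inter> f ` P j = f ` (P i \<inter> P j)"
        using f(2) PV ij by (intro inj_on_image_Int[symmetric, of _ VH]) auto
      then show "f ` P i \<inter> f ` P j = {}" using assms(3) ij by auto
    qed
  qed
  also have "(\<Union>i<k. f ` P i) = f ` VH" using assms(2) by auto
  also have "(\<Sum>v\<in>f ` VH. g (c v)) = (\<Sum>j\<in>c ` f ` VH. g j)"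
    using sum.reindex[OF cinj, of g] by simp
  also have "\<dots> = card (\<Union>j\<in>c ` f ` VH. I j)"
    unfolding g_def
  proof (intro card_UN_disjoint[symmetric])
    show "finite (c ` f ` VH)" using finVH by simp
    show "\<forall>i\<in>c ` f ` VH. finite (I i)" using IV finVG by (meson finite_subset)
    show "\<forall>i\<in>c ` f ` VH. \<forall>j\<in>c ` f ` VH. i \<noteq> j \<longrightarrow> I i \<inter> I j = {}" using Id by blast
  qed
  also have "\<dots> \<le> card VG" using IV finVG by (intro card_mono) auto
  finally show "enat (\<Sum>i<k. x i * (x i + 1) div 2) \<le> enat (card VG)" by simp
qed

end
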